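(* Let $X$ be a collectionwise normal space and $\mathcal{U}$ an open cover of $X$. If there is a sequence $(\mathcal{U}_n)_{n\ge1}$ of open covers of $X$ such that for every $U\in\mathcal{U}$ and every $x\in U$ there is $n\ge1$ with $st(x,\mathcal{U}_n)\subset U$, then $X$ admits a $\mathcal{U}$-small partition of unity.
   Context: $st(x,\mathcal{W})=\bigcup\{W\in\mathcal{W}:x\in W\}$. Collectionwise normal means $T_1$ and every discrete family of closed sets $\{A_s\}$ admits a discrete family of open sets $\{U_s\}$ with $A_s\subset U_s$ (a family is discrete if each point has a neighborhood meeting at most one member). A partition of unity on $X$ indexed by a nonempty set $S$ is a family $\{f_s\}_{s\in S}$ of functions $f_s:X\to[0,1]$ with $\sum_s f_s(x)=1$ for all $x$, such that the induced map $X\to l_1(S)$ is continuous for the $l_1$-norm; it is $\mathcal{U}$-small if each carrier $f_s^{-1}((0,1])$ lies in some element of $\mathcal{U}$. *)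

theory Defs
  imports "HOL-Analysis.Analysis"
begin

definition st :: "'a \<Rightarrow> 'a set set \<Rightarrow> 'a set" where
  "st x \<W> = \<Union>{W \<in> \<W>. x \<in> W}"

definition discrete_family :: "'a::topological_space set set \<Rightarrow> bool" where
  "discrete_family \<A> \<longleftrightarrow>
     (\<forall>x. \<exists>V. open V \<and> x \<in> V \<and>
        (\<forall>A\<in>\<A>. \<forall>B\<in>\<A>. V \<inter> A \<noteq> {} \<and> V \<inter> B \<noteq> {} \<longrightarrow> A = B))"

definition discrete_indexed :: "'i set \<Rightarrow> ('i \<Rightarrow> 'a::topological_space set) \<Rightarrow> bool" where
  "discrete_indexed I U \<longleftrightarrow>
     (\<forall>x. \<exists>V. open V \<and> x \<in> V \<and>
        (\<forall>i\<in>I. \<forall>j\<in>I. V \<inter> U i \<noteq> {} \<and> V \<inter> U j \<noteq> {} \<longrightarrow> i = j))"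

definition collectionwise_normal :: "'a::topological_space itself \<Rightarrow> bool" where
  "collectionwise_normal _ \<longleftrightarrow>
     (\<forall>x y::'a. x \<noteq> y \<longrightarrow> (\<exists>U. open U \<and> x \<in> U \<and> y \<notin> U)) \<and>
     (\<forall>\<A>::'a set set. (\<forall>A\<in>\<A>. closed A) \<and> discrete_family \<A> \<longrightarrow>
        (\<exists>U::'a set \<Rightarrow> 'a set. (\<forall>A\<in>\<A>. open (U A) \<and> A \<subseteq> U A) \<and> discrete_indexed \<A> U))"

definition open_cover :: "'a::topological_space set set \<Rightarrow> bool" where
  "open_cover \<U> \<longleftrightarrow> (\<forall>U\<in>\<U>. open U) \<and> \<Union>\<U> = UNIV"

text \<open>Partition of unity indexed by S: values in [0,1], pointwise sum 1, and the induced
  map X \<rightarrow> l1(S) continuous for the l1 norm.\<close>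
definition partition_of_unity :: "'s set \<Rightarrow> ('s \<Rightarrow> 'a::topological_space \<Rightarrow> real) \<Rightarrow> bool" where
  "partition_of_unity S f \<longleftrightarrow>
     S \<noteq> {} \<and>
     (\<forall>s\<in>S. \<forall>x. 0 \<le> f s x \<and> f s x \<le> 1) \<and>
     (\<forall>x. ((\<lambda>s. f s x) has_sum 1) S) \<and>
     (\<forall>x. \<forall>e>0. \<exists>V. open V \<and> x \<in> V \<and>
        (\<forall>y\<in>V. infsum (\<lambda>s. \<bar>f s y - f s x\<bar>) S < e))"

definition small_partition :: "'a::topological_space set set \<Rightarrow> 's set \<Rightarrow> ('s \<Rightarrow> 'a \<Rightarrow> real) \<Rightarrow> bool" where
  "small_partition \<U> S f \<longleftrightarrow> (\<forall>s\<in>S. \<exists>U\<in>\<U>. {x. f s x \<in> {0<..1}} \<subseteq> U)"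

end

theory Submission imports Defs begin

lemma fin_summable:
  fixes \<phi> :: "'b \<Rightarrow> real"
  assumes "\<And>s. s\<in>S \<Longrightarrow> 0 \<le> \<phi> s" "\<And>F. finite F \<Longrightarrow> F \<subseteq> S \<Longrightarrow> sum \<phi> F \<le> B"
  shows "\<phi> summable_on S" "infsum \<phi> S \<le> B"
proof -
  show 1: "\<phi> summable_on S"
    by (rule nonneg_bdd_above_summable_on) (use assms in \<open>auto simp: bdd_above_def\<close>)
  show "infsum \<phi> S \<le> B"
    by (rule infsum_le_finite_sums[OF 1]) (use assms in auto)
qed

lemma sum_le_infsum_nn:
  fixes \<phi> :: "'b \<Rightarrow> real"
  assumes "\<phi> summable_on S" "\<And>s. s\<in>S \<Longrightarrow> 0 \<le> \<phi> s" "finite F" "F \<subseteq> S"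
  shows "sum \<phi> F \<le> infsum \<phi> S"
proof -
  have "infsum \<phi> F \<le> infsum \<phi> S"
    by (rule infsum_mono_neutral) (use assms in auto)
  then show ?thesis using assms(3) by simp
qed

lemma geo_summable:
  fixes c :: "nat \<Rightarrow> real"
  assumes "\<And>n. \<bar>c n\<bar> \<le> M"
  shows "summable (\<lambda>n. (1/2)^n * c n)"
proof (rule summable_comparison_test)
  show "\<exists>N. \<forall>n\<ge>N. norm ((1/2)^n * c n) \<le> M * (1/2)^n"
    using assms by (auto simp: abs_mult mult.commute intro!: mult_left_mono)
  show "summable (\<lambda>n. M * (1/2::real)^n)"
    by (intro summable_mult summable_geometric) auto
qed

lemma geo_le:
  fixes c :: "nat \<Rightarrow> real"
  assumes "\<And>n. 0 \<le> c n" "\<And>n. c n \<le> M"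
  shows "(\<Sum>n. (1/2)^n * c n) \<le> 2 * M"
proof -
  have "(\<Sum>n. (1/2)^n * c n) \<le> (\<Sum>n. M * (1/2::real)^n)"
    apply (rule suminf_le)
    using assms apply (simp add: mult.commute mult_left_mono)
    using assms apply (intro geo_summable[of _ M]) apply (metis abs_of_nonneg)
    by (intro summable_mult summable_geometric) auto
  also have "\<dots> = 2 * M"
    by (subst suminf_mult) (auto simp: suminf_geometric)
  finally show ?thesis .
qed

lemma tail_bound:
  fixes c :: "nat \<Rightarrow> real"
  assumes "\<And>n. 0 \<le> c n" "\<And>n. c n \<le> 2" "\<And>n. n < N \<Longrightarrow> c n \<le> \<epsilon>" "0 \<le> \<epsilon>"
  shows "(\<Sum>n. (1/2)^n * c n) \<le> 2*\<epsilon> + 4*(1/2)^N"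
proof -
  have s: "summable (\<lambda>n. (1/2::real)^n * c n)"
    by (rule geo_summable[of _ 2]) (use assms in \<open>auto simp: abs_le_iff\<close>)
  have "(\<Sum>n. (1/2)^n * c n) = (\<Sum>n. (1/2)^(n+N) * c (n+N)) + (\<Sum>i<N. (1/2)^i * c i)"
    by (rule suminf_split_initial_segment[OF s])
  also have "(\<Sum>n. (1/2::real)^(n+N) * c (n+N)) = (1/2)^N * (\<Sum>n. (1/2)^n * c (n+N))"
  proof -
    have "summable (\<lambda>n. (1/2::real)^n * c (n+N))"
      by (rule geo_summable[of _ 2]) (use assms in \<open>auto simp: abs_le_iff\<close>)
    then show ?thesis
      by (subst suminf_mult[symmetric]) (auto simp: power_add mult_ac)
  qed
  also have "(\<Sum>n. (1/2::real)^n * c (n+N)) \<le> 2 * 2"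
    by (rule geo_le) (use assms in auto)
  also have "(\<Sum>i<N. (1/2::real)^i * c i) \<le> (\<Sum>i<N. (1/2)^i * \<epsilon>)"
    by (rule sum_mono) (use assms in \<open>auto intro: mult_left_mono\<close>)
  also have "\<dots> = \<epsilon> * (\<Sum>i<N. (1/2::real)^i)"
    by (simp add: sum_distrib_left mult_ac)
  also have "(\<Sum>i<N. (1/2::real)^i) \<le> 2"
  proof -
    have "(\<Sum>i<N. (1/2::real)^i) \<le> (\<Sum>i. (1/2)^i)"
      by (rule sum_le_suminf) (auto intro: summable_geometric)
    then show ?thesis by (simp add: suminf_geometric)
  qed
  finally show ?thesis using assms(4) by (simp add: mult_left_mono)
qed


lemma cwn_normal:
  assumes "collectionwise_normal TYPE('a::topological_space)"
  shows "normal_space (euclidean::'a topology)"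
  unfolding normal_space_def
proof (intro allI impI)
  fix S T :: "'a set"
  assume H: "closedin euclidean S \<and> closedin euclidean T \<and> disjnt S T"
  then have cS: "closed S" and cT: "closed T" and dj: "S \<inter> T = {}" by (auto simp: disjnt_def)
  show "\<exists>U V. openin euclidean U \<and> openin euclidean V \<and> S \<subseteq> U \<and> T \<subseteq> V \<and> disjnt U V"
  proof (cases "S = {}")
    case True then show ?thesis by (intro exI[of _ "{}"] exI[of _ UNIV]) auto
  next
    case False
    have disc: "discrete_family {S, T}"
      unfolding discrete_family_def
    proof
      fix x
      show "\<exists>V. open V \<and> x \<in> V \<and> (\<forall>A\<in>{S,T}. \<forall>B\<in>{S,T}. V \<inter> A \<noteq> {} \<and> V \<inter> B \<noteq> {} \<longrightarrow> A = B)"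
      proof (cases "x \<in> S")
        case True
        then have "x \<in> - T" using dj by auto
        then show ?thesis using cT by (intro exI[of _ "- T"]) (auto simp: open_Compl)
      next
        case False
        then show ?thesis using cS by (intro exI[of _ "- S"]) (auto simp: open_Compl)
      qed
    qed
    have pre: "(\<forall>A\<in>{S,T}. closed A) \<and> discrete_family {S,T}" using disc cS cT by simp
    from assms[unfolded collectionwise_normal_def, THEN conjunct2, rule_format, OF pre] obtain G where
      G: "\<forall>A\<in>{S,T}. open (G A) \<and> A \<subseteq> G A" and GD: "discrete_indexed {S,T} G"
      by blast
    have "G S \<inter> G T = {}"
    proof (rule ccontr)
      assume "G S \<inter> G T \<noteq> {}"
      then obtain z where z: "z \<in> G S" "z \<in> G T" by auto
      from GD[unfolded discrete_indexed_def, rule_format, of z] obtain V where "open V" "z \<in> V" "\<forall>i\<in>{S,T}. \<forall>j\<in>{S,T}. V \<inter> G i \<noteq> {} \<and> V \<inter> G j \<noteq> {} \<longrightarrow> i = j"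
        by (elim exE conjE) (rule that)
      then have "S = T" using z by (metis IntI empty_iff insertCI)
      then show False using dj False by auto
    qed
    then show ?thesis using G by (intro exI[of _ "G S"] exI[of _ "G T"]) (auto simp: disjnt_def)
  qed
qed


theorem theorem5p5:
  fixes \<U> :: "'a::topological_space set set"
    and \<V> :: "nat \<Rightarrow> 'a set set"
  assumes "collectionwise_normal TYPE('a)"
    and "open_cover \<U>"
    and "\<And>n. n \<ge> 1 \<Longrightarrow> open_cover (\<V> n)"
    and "\<And>U x. U \<in> \<U> \<Longrightarrow> x \<in> U \<Longrightarrow> \<exists>n\<ge>1. st x (\<V> n) \<subseteq> U"
  shows "\<exists>(S::'a set set) f. partition_of_unity S f \<and> small_partition \<U> S f"
proof -
  have Uopen: "\<And>U. U \<in> \<U> \<Longrightarrow> open U" and Ucov: "\<Union>\<U> = UNIV"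
    using assms(2) by (auto simp: open_cover_def)
  have Vopen: "\<And>n W. W \<in> \<V> (Suc n) \<Longrightarrow> open W" and Vcov: "\<And>n x. \<exists>W\<in>\<V> (Suc n). x \<in> W"
    using assms(3)[of "Suc _"] unfolding open_cover_def by (auto simp: set_eq_iff)
  have stV: "\<exists>n. st x (\<V> (Suc n)) \<subseteq> U" if Ux: "U \<in> \<U>" "x \<in> U" for U x
  proof -
    obtain n where "n \<ge> 1" "st x (\<V> n) \<subseteq> U" using assms(4)[OF Ux] by blast
    moreover have "Suc (n - 1) = n" using \<open>n \<ge> 1\<close> by simp
    ultimately show ?thesis by metis
  qed
  obtain r :: "'a set rel" where r0: "Well_order r \<and> Field r = UNIV"
    using well_ordering[where 'a = "'a set"] by (rule exE)
  note r = r0[THEN conjunct1] r0[THEN conjunct2]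
  define lt where "lt = (\<lambda>U' U. (U',U) \<in> r - Id)"
  have wf: "wf (r - Id)" using r(1) by (simp add: well_order_on_def)
  have tot: "lt U U' \<or> lt U' U" if "U \<noteq> U'" for U U'
    using r that unfolding lt_def well_order_on_def linear_order_on_def total_on_def by auto
  define F where "F n U = {x. st x (\<V> (Suc n)) \<subseteq> U}" for n U
  define A where "A n U = F n U - \<Union>{U'\<in>\<U>. lt U' U}" for n U
  have xst: "x \<in> st x (\<V> (Suc n))" for x n using Vcov[of n x] unfolding st_def by blast
  have Wst: "W \<subseteq> st y (\<V> (Suc n))" if "W \<in> \<V> (Suc n)" "y \<in> W" for W y n
    using that unfolding st_def by blast
  have F_sub: "F n U \<subseteq> U" for n U using xst unfolding F_def by auto
  have F_closed: "closed (F n U)" for n U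
  proof -
    have "open (- F n U)"
    proof (rule Topological_Spaces.openI)
      fix x assume "x \<in> - F n U"
      then obtain W where W: "W \<in> \<V> (Suc n)" "x \<in> W" "\<not> W \<subseteq> U"
        unfolding F_def st_def by blast
      have "W \<subseteq> - F n U" using W Wst unfolding F_def by blast
      then show "\<exists>T. open T \<and> x \<in> T \<and> T \<subseteq> - F n U" using W Vopen by blast
    qed
    then show ?thesis by (simp add: closed_def)
  qed
  have A_closed: "closed (A n U)" for n U
    unfolding A_def using F_closed Uopen by (intro closed_Diff open_Union) auto
  have A_sub: "A n U \<subseteq> U" for n U using F_sub unfolding A_def by auto
  have A_sep1: False if "U \<in> \<U>" "U' \<in> \<U>" "lt U' U" "W \<in> \<V> (Suc n)" "x \<in> W" "y \<in> W"
    "x \<in> A n U" "y \<in> A n U'" for n U U' W x y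
  proof -
    have "x \<notin> U'" using that unfolding A_def by auto
    moreover have "W \<subseteq> U'" using that Wst[of W n y] unfolding A_def F_def by auto
    ultimately show False using that by auto
  qed
  have A_sep: "U = U'" if "U \<in> \<U>" "U' \<in> \<U>" "W \<in> \<V> (Suc n)" "x \<in> W" "y \<in> W"
    "x \<in> A n U" "y \<in> A n U'" for n U U' W x y
  proof (rule ccontr)
    assume "U \<noteq> U'"
    then have "lt U U' \<or> lt U' U" by (rule tot)
    then show False
      using A_sep1[of U U' W n x y] A_sep1[of U' U W n y x] that by blast
  qed
  have A_disj: "U = U'" if "U \<in> \<U>" "U' \<in> \<U>" "x \<in> A n U" "x \<in> A n U'" for n U U' x
    using Vcov[of n x] A_sep that by blast
  have A_cover: "\<exists>n. \<exists>U\<in>\<U>. x \<in> A n U" for x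
  proof -
    have "x \<in> \<Union>\<U>" using Ucov by auto
    then obtain U0 where "U0 \<in> {U\<in>\<U>. x \<in> U}" by auto
    from wfE_min[OF wf this] obtain U where U: "U \<in> {U\<in>\<U>. x \<in> U}"
      and min: "\<And>y. (y, U) \<in> r - Id \<Longrightarrow> y \<notin> {U\<in>\<U>. x \<in> U}" by blast
    obtain n where "st x (\<V> (Suc n)) \<subseteq> U" using stV U by blast
    then have "x \<in> A n U" using min unfolding A_def F_def lt_def by auto
    then show ?thesis using U by blast
  qed
  have disc: "discrete_family (A n ` \<U>)" for n
    unfolding discrete_family_def
  proof
    fix z
    obtain W where W: "W \<in> \<V> (Suc n)" "z \<in> W" using Vcov by blast
    have oW: "open W" using Vopen W(1) by blast
    have key: "\<forall>B\<in>A n ` \<U>. \<forall>C\<in>A n ` \<U>. W \<inter> B \<noteq> {} \<and> W \<inter> C \<noteq> {} \<longrightarrow> B = C"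
    proof (intro ballI impI)
      fix B C assume "B \<in> A n ` \<U>" "C \<in> A n ` \<U>" "W \<inter> B \<noteq> {} \<and> W \<inter> C \<noteq> {}"
      then obtain U U' x y where "U \<in> \<U>" "U' \<in> \<U>" "B = A n U" "C = A n U'" "x \<in> W" "y \<in> W"
        "x \<in> A n U" "y \<in> A n U'" by blast
      then show "B = C" using A_sep[of U U' W n x y] W by blast
    qed
    show "\<exists>V. open V \<and> z \<in> V \<and> (\<forall>B\<in>A n ` \<U>. \<forall>C\<in>A n ` \<U>. V \<inter> B \<noteq> {} \<and> V \<inter> C \<noteq> {} \<longrightarrow> B = C)"
      by (intro exI[of _ W] conjI oW W(2) key)
  qed
  have "\<forall>n. \<exists>G. (\<forall>B\<in>A n ` \<U>. open (G B) \<and> B \<subseteq> G B) \<and> discrete_indexed (A n ` \<U>) G"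
  proof
    fix n
    have pre: "(\<forall>B\<in>A n ` \<U>. closed B) \<and> discrete_family (A n ` \<U>)" using disc A_closed by blast
    show "\<exists>G. (\<forall>B\<in>A n ` \<U>. open (G B) \<and> B \<subseteq> G B) \<and> discrete_indexed (A n ` \<U>) G"
      using assms(1)[unfolded collectionwise_normal_def, THEN conjunct2, rule_format, OF pre] .
  qed
  then obtain G where G: "\<And>n B. B \<in> A n ` \<U> \<Longrightarrow> open (G n B) \<and> B \<subseteq> G n B"
    and GD: "\<And>n. discrete_indexed (A n ` \<U>) (G n)"
    by metis
  define Gn where "Gn n U = (if A n U = {} then {} else G n (A n U) \<inter> U)" for n U
  have Gn_open: "open (Gn n U)" if "U \<in> \<U>" for n U
    using G[of "A n U" n] Uopen that unfolding Gn_def by auto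
  have A_Gn: "A n U \<subseteq> Gn n U" if "U \<in> \<U>" for n U
    using G[of "A n U" n] A_sub that unfolding Gn_def by auto
  have Gn_sub: "Gn n U \<subseteq> U" for n U unfolding Gn_def by auto
  have Gn_loc: "\<exists>Ob. open Ob \<and> x \<in> Ob \<and> (\<forall>U\<in>\<U>. \<forall>U'\<in>\<U>. Ob \<inter> Gn n U \<noteq> {} \<longrightarrow> Ob \<inter> Gn n U' \<noteq> {} \<longrightarrow> U = U')" for n x
  proof -
    obtain Ob where Ob: "open Ob" "x \<in> Ob"
      "\<And>i j. i \<in> A n ` \<U> \<Longrightarrow> j \<in> A n ` \<U> \<Longrightarrow> Ob \<inter> G n i \<noteq> {} \<Longrightarrow> Ob \<inter> G n j \<noteq> {} \<Longrightarrow> i = j"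
      using GD[of n] unfolding discrete_indexed_def by metis
    have "U = U'" if "U \<in> \<U>" "U' \<in> \<U>" "Ob \<inter> Gn n U \<noteq> {}" "Ob \<inter> Gn n U' \<noteq> {}" for U U'
    proof -
      have ne: "A n U \<noteq> {}" "A n U' \<noteq> {}" using that unfolding Gn_def by (auto split: if_splits)
      have "Ob \<inter> G n (A n U) \<noteq> {}" "Ob \<inter> G n (A n U') \<noteq> {}" using that ne unfolding Gn_def by auto
      then have "A n U = A n U'" using Ob(3) that by blast
      then show ?thesis using ne A_disj that by blast
    qed
    then show ?thesis using Ob by blast
  qed
  have Gn_disj: "U = U'" if "U \<in> \<U>" "U' \<in> \<U>" "x \<in> Gn n U" "x \<in> Gn n U'" for n U U' x
    using Gn_loc[of x n] that by blast
  have normal: "normal_space (euclidean::'a topology)" by (rule cwn_normal[OF assms(1)])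
  have "\<forall>n. \<forall>U\<in>\<U>. \<exists>g. continuous_map euclidean (top_of_set {0..1}) g \<and> g ` (- Gn n U) \<subseteq> {0} \<and> g ` A n U \<subseteq> {1::real}"
  proof (intro allI ballI)
    fix n U assume U: "U \<in> \<U>"
    have c1: "closedin euclidean (- Gn n U)" and c2: "closedin euclidean (A n U)"
      using Gn_open[OF U] A_closed by (auto simp: closed_Compl simp del: closed_closedin simp add: closed_closedin[symmetric])
    have dj: "disjnt (- Gn n U) (A n U)" using A_Gn[OF U] by (auto simp: disjnt_def)
    obtain gg where "continuous_map euclidean (top_of_set {0..1}) gg" "gg ` (- Gn n U) \<subseteq> {0}" "gg ` A n U \<subseteq> {1::real}"
      using Urysohn_lemma[OF normal c1 c2 dj, of 0 1] by auto
    then show "\<exists>g. continuous_map euclidean (top_of_set {0..1}) g \<and> g ` (- Gn n U) \<subseteq> {0} \<and> g ` A n U \<subseteq> {1::real}"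
      by blast
  qed
  then obtain g where g: "\<And>n U. U \<in> \<U> \<Longrightarrow> continuous_map euclidean (top_of_set {0..1}) (g n U) \<and> g n U ` (- Gn n U) \<subseteq> {0} \<and> g n U ` A n U \<subseteq> {1::real}"
    by metis
  have g_range: "0 \<le> g n U x \<and> g n U x \<le> 1" if "U \<in> \<U>" for n U x
    using g[OF that, of n] unfolding continuous_map_in_subtopology by auto
  have g_one: "g n U x = 1" if "U \<in> \<U>" "x \<in> A n U" for n U x
    using g[OF that(1), of n] that(2) by auto
  have g_zero: "g n U x = 0" if "U \<in> \<U>" "x \<notin> Gn n U" for n U x
    using g[OF that(1), of n] that(2) by auto
  have g_cont: "\<exists>Ob. open Ob \<and> x \<in> Ob \<and> (\<forall>y\<in>Ob. \<bar>g n U y - g n U x\<bar> < \<epsilon>)" if "U \<in> \<U>" "\<epsilon> > 0" for n U x \<epsilon>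
  proof -
    have c: "continuous_on UNIV (g n U)"
      using g[OF that(1), of n] unfolding continuous_map_in_subtopology by simp
    have "open (g n U -` ball (g n U x) \<epsilon>)"
      by (rule open_vimage[OF open_ball c])
    then show ?thesis using that(2)
      by (intro exI[of _ "g n U -` ball (g n U x) \<epsilon>"]) (auto simp: dist_real_def abs_minus_commute)
  qed

  have gsum1: "(\<Sum>U\<in>FF. g n U x) \<le> 1" if "finite FF" "FF \<subseteq> \<U>" for FF n x
  proof (cases "\<exists>U0\<in>FF. x \<in> Gn n U0")
    case True
    then obtain U0 where U0: "U0 \<in> FF" "x \<in> Gn n U0" by blast
    have "(\<Sum>U\<in>FF. g n U x) \<le> (\<Sum>U\<in>FF. if U = U0 then 1 else 0)"
    proof (rule sum_mono)
      fix U assume U: "U \<in> FF"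
      show "g n U x \<le> (if U = U0 then 1 else 0)"
      proof (cases "U = U0")
        case True then show ?thesis using g_range[where U=U and n=n and x=x] U that by auto
      next
        case False
        then have "x \<notin> Gn n U" using Gn_disj[where U=U and U'=U0 and x=x and n=n] U U0 that by blast
        then show ?thesis using g_zero[where U=U and x=x and n=n] U that False by auto
      qed
    qed
    also have "\<dots> = 1" using U0 that by (simp add: sum.delta)
    finally show ?thesis .
  next
    case False
    then have "(\<Sum>U\<in>FF. g n U x) = 0" using g_zero that by (intro sum.neutral) blast
    then show ?thesis by simp
  qed
  have gsum0: "0 \<le> (\<Sum>U\<in>FF. g n U x)" if "FF \<subseteq> \<U>" for FF n x
    using g_range that by (intro sum_nonneg) blast
  have gdiff2: "(\<Sum>U\<in>FF. \<bar>g n U y - g n U x\<bar>) \<le> 2" if "finite FF" "FF \<subseteq> \<U>" for FF n x y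
  proof -
    have "(\<Sum>U\<in>FF. \<bar>g n U y - g n U x\<bar>) \<le> (\<Sum>U\<in>FF. g n U y + g n U x)"
      using g_range that by (intro sum_mono) (smt (verit) subsetD)
    also have "\<dots> = (\<Sum>U\<in>FF. g n U y) + (\<Sum>U\<in>FF. g n U x)" by (rule sum.distrib)
    also have "\<dots> \<le> 2" using gsum1[OF that, where n=n and x=y] gsum1[OF that, where n=n and x=x] by simp
    finally show ?thesis .
  qed
  have gdiff_small: "\<exists>P. open P \<and> x \<in> P \<and> (\<forall>y\<in>P. \<forall>FF. finite FF \<longrightarrow> FF \<subseteq> \<U> \<longrightarrow> (\<Sum>U\<in>FF. \<bar>g n U y - g n U x\<bar>) \<le> \<epsilon>)"
    if eps: "\<epsilon> > 0" for n x \<epsilon>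
  proof -
    obtain Ob where Ob: "open Ob" "x \<in> Ob"
      "\<And>U U'. U \<in> \<U> \<Longrightarrow> U' \<in> \<U> \<Longrightarrow> Ob \<inter> Gn n U \<noteq> {} \<Longrightarrow> Ob \<inter> Gn n U' \<noteq> {} \<Longrightarrow> U = U'"
      using Gn_loc[where n=n and x=x] by metis
    show ?thesis
    proof (cases "\<exists>U0\<in>\<U>. Ob \<inter> Gn n U0 \<noteq> {}")
      case True
      then obtain U0 where U0: "U0 \<in> \<U>" "Ob \<inter> Gn n U0 \<noteq> {}" by blast
      obtain Q where Q: "open Q" "x \<in> Q" "\<And>y. y \<in> Q \<Longrightarrow> \<bar>g n U0 y - g n U0 x\<bar> < \<epsilon>"
        using g_cont[OF U0(1) eps, where n=n and x=x] by blast
      have "(\<Sum>U\<in>FF. \<bar>g n U y - g n U x\<bar>) \<le> \<epsilon>"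
        if y: "y \<in> Ob \<inter> Q" and FF: "finite FF" "FF \<subseteq> \<U>" for y FF
      proof -
        have "(\<Sum>U\<in>FF. \<bar>g n U y - g n U x\<bar>) \<le> (\<Sum>U\<in>FF. if U = U0 then \<epsilon> else 0)"
        proof (rule sum_mono)
          fix U assume U: "U \<in> FF"
          show "\<bar>g n U y - g n U x\<bar> \<le> (if U = U0 then \<epsilon> else 0)"
          proof (cases "U = U0")
            case True then show ?thesis using Q(3)[of y] y by auto
          next
            case False
            then have "Ob \<inter> Gn n U = {}" using Ob(3)[of U U0] U FF U0 by blast
            then have "x \<notin> Gn n U" "y \<notin> Gn n U" using Ob(2) y by auto
            then show ?thesis using g_zero[where U=U and n=n] U FF False by auto
          qed
        qed
        also have "\<dots> \<le> \<epsilon>" using FF eps by (simp add: sum.delta)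
        finally show ?thesis .
      qed
      then show ?thesis using Ob Q by (intro exI[of _ "Ob \<inter> Q"]) auto
    next
      case False
      have "(\<Sum>U\<in>FF. \<bar>g n U y - g n U x\<bar>) \<le> \<epsilon>"
        if y: "y \<in> Ob" and FF: "finite FF" "FF \<subseteq> \<U>" for y FF
      proof -
        have "(\<Sum>U\<in>FF. \<bar>g n U y - g n U x\<bar>) = 0"
        proof (rule sum.neutral, rule ballI)
          fix U assume U: "U \<in> FF"
          then have "x \<notin> Gn n U" "y \<notin> Gn n U" using False FF Ob(2) y by auto
          then show "\<bar>g n U y - g n U x\<bar> = 0" using g_zero[where U=U and n=n] U FF by auto
        qed
        then show ?thesis using \<open>\<epsilon> > 0\<close> by simp
      qed
      then show ?thesis using Ob by blast
    qed
  qed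
  define h where "h U x = (\<Sum>n. (1/2)^n * g n U x)" for U x
  have h_summ: "summable (\<lambda>n. (1/2::real)^n * g n U x)" if "U \<in> \<U>" for U x
    by (rule geo_summable[of _ 1]) (use g_range[OF that] in \<open>auto simp: abs_le_iff\<close>)
  have h_nonneg: "0 \<le> h U x" if "U \<in> \<U>" for U x
    unfolding h_def using h_summ[OF that] g_range[OF that] by (intro suminf_nonneg) auto
  have hsum2: "(\<Sum>U\<in>FF. h U x) \<le> 2" if "finite FF" "FF \<subseteq> \<U>" for FF x
  proof -
    have "(\<Sum>U\<in>FF. h U x) = (\<Sum>n. \<Sum>U\<in>FF. (1/2)^n * g n U x)"
      unfolding h_def using h_summ that by (intro suminf_sum[symmetric]) blast
    also have "\<dots> = (\<Sum>n. (1/2)^n * (\<Sum>U\<in>FF. g n U x))" by (simp add: sum_distrib_left)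
    also have "\<dots> \<le> 2 * 1"
      by (rule geo_le) (use gsum1[OF that] gsum0[OF that(2)] in auto)
    finally show ?thesis by simp
  qed
  have hdiff: "(\<Sum>U\<in>FF. \<bar>h U y - h U x\<bar>) \<le> (\<Sum>n. (1/2)^n * (\<Sum>U\<in>FF. \<bar>g n U y - g n U x\<bar>))"
    if "finite FF" "FF \<subseteq> \<U>" for FF x y
  proof -
    have s2: "summable (\<lambda>n. (1/2::real)^n * \<bar>g n U y - g n U x\<bar>)" if "U \<in> \<U>" for U
    proof (rule geo_summable[of _ 1])
      fix n
      show "\<bar>\<bar>g n U y - g n U x\<bar>\<bar> \<le> 1"
        using g_range[OF that, where n=n and x=x] g_range[OF that, where n=n and x=y] by auto
    qed
    have "\<bar>h U y - h U x\<bar> \<le> (\<Sum>n. (1/2)^n * \<bar>g n U y - g n U x\<bar>)" if "U \<in> \<U>" for U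
    proof -
      have "h U y - h U x = (\<Sum>n. (1/2)^n * g n U y - (1/2)^n * g n U x)"
        unfolding h_def by (rule suminf_diff[OF h_summ[OF that] h_summ[OF that]])
      also have "\<dots> = (\<Sum>n. (1/2)^n * (g n U y - g n U x))" by (simp add: right_diff_distrib)
      finally have e: "h U y - h U x = (\<Sum>n. (1/2)^n * (g n U y - g n U x))" .
      have "\<bar>\<Sum>n. (1/2::real)^n * (g n U y - g n U x)\<bar> \<le> (\<Sum>n. \<bar>(1/2)^n * (g n U y - g n U x)\<bar>)"
        by (rule summable_rabs) (use s2[OF that] in \<open>simp add: abs_mult\<close>)
      then show ?thesis unfolding e by (simp add: abs_mult)
    qed
    then have "(\<Sum>U\<in>FF. \<bar>h U y - h U x\<bar>) \<le> (\<Sum>U\<in>FF. \<Sum>n. (1/2)^n * \<bar>g n U y - g n U x\<bar>)"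
      using that by (intro sum_mono) blast
    also have "\<dots> = (\<Sum>n. \<Sum>U\<in>FF. (1/2)^n * \<bar>g n U y - g n U x\<bar>)"
      using s2 that by (intro suminf_sum[symmetric]) blast
    also have "\<dots> = (\<Sum>n. (1/2)^n * (\<Sum>U\<in>FF. \<bar>g n U y - g n U x\<bar>))" by (simp add: sum_distrib_left)
    finally show ?thesis .
  qed
  have hdiff_small: "\<exists>P. open P \<and> x \<in> P \<and> (\<forall>y\<in>P. \<forall>FF. finite FF \<longrightarrow> FF \<subseteq> \<U> \<longrightarrow> (\<Sum>U\<in>FF. \<bar>h U y - h U x\<bar>) \<le> \<delta>)"
    if dpos: "\<delta> > 0" for x \<delta>
  proof -
    obtain N where N: "(1/2::real)^N < \<delta>/8" using real_arch_pow_inv[of "\<delta>/8" "1/2"] dpos by auto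
    define \<epsilon> where "\<epsilon> = \<delta>/4"
    have ep: "\<epsilon> > 0" using dpos by (simp add: \<epsilon>_def)
    have "\<forall>n. \<exists>P. open P \<and> x \<in> P \<and> (\<forall>y\<in>P. \<forall>FF. finite FF \<longrightarrow> FF \<subseteq> \<U> \<longrightarrow> (\<Sum>U\<in>FF. \<bar>g n U y - g n U x\<bar>) \<le> \<epsilon>)"
      using gdiff_small[OF ep] by blast
    then obtain Pf where Pf: "\<And>n. open (Pf n)" "\<And>n. x \<in> Pf n"
      "\<And>n y FF. y \<in> Pf n \<Longrightarrow> finite FF \<Longrightarrow> FF \<subseteq> \<U> \<Longrightarrow> (\<Sum>U\<in>FF. \<bar>g n U y - g n U x\<bar>) \<le> \<epsilon>"
      by metis
    define P where "P = (\<Inter>n\<in>{..<N}. Pf n)"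
    have "open P" unfolding P_def using Pf(1) by (intro open_INT) auto
    moreover have "x \<in> P" unfolding P_def using Pf(2) by auto
    moreover have "(\<Sum>U\<in>FF. \<bar>h U y - h U x\<bar>) \<le> \<delta>" if y: "y \<in> P" and FF: "finite FF" "FF \<subseteq> \<U>" for y FF
    proof -
      have "(\<Sum>U\<in>FF. \<bar>h U y - h U x\<bar>) \<le> (\<Sum>n. (1/2)^n * (\<Sum>U\<in>FF. \<bar>g n U y - g n U x\<bar>))"
        by (rule hdiff[OF FF])
      also have "\<dots> \<le> 2*\<epsilon> + 4*(1/2)^N"
      proof (rule tail_bound)
        show "\<And>n. 0 \<le> (\<Sum>U\<in>FF. \<bar>g n U y - g n U x\<bar>)" by (simp add: sum_nonneg)
        show "\<And>n. (\<Sum>U\<in>FF. \<bar>g n U y - g n U x\<bar>) \<le> 2" by (rule gdiff2[OF FF])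
        show "\<And>n. n < N \<Longrightarrow> (\<Sum>U\<in>FF. \<bar>g n U y - g n U x\<bar>) \<le> \<epsilon>"
          using Pf(3) y FF unfolding P_def by blast
        show "0 \<le> \<epsilon>" using ep by simp
      qed
      also have "\<dots> \<le> \<delta>" using N unfolding \<epsilon>_def by simp
      finally show ?thesis .
    qed
    ultimately show ?thesis by blast
  qed

  define H where "H x = infsum (\<lambda>U. h U x) \<U>" for x
  have hU_summ: "(\<lambda>U. h U x) summable_on \<U>" for x
    by (rule fin_summable(1)[of _ _ 2]) (use h_nonneg hsum2 in auto)
  have Hsum: "(\<Sum>U\<in>FF. h U x) \<le> H x" if "finite FF" "FF \<subseteq> \<U>" for FF x
    unfolding H_def by (rule sum_le_infsum_nn[OF hU_summ]) (use h_nonneg that in auto)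
  have h_le_H: "h U x \<le> H x" if "U \<in> \<U>" for U x
    using Hsum[of "{U}" x] that by simp
  have H_pos: "H x > 0" for x
  proof -
    obtain n U where U: "U \<in> \<U>" "x \<in> A n U" using A_cover by blast
    have "(\<Sum>i\<in>{n}. (1/2::real)^i * g i U x) \<le> h U x"
      unfolding h_def using h_summ[OF U(1)] g_range[OF U(1)] by (intro sum_le_suminf) auto
    then have "(1/2::real)^n \<le> h U x" using g_one[OF U] by simp
    moreover have "(0::real) < (1/2)^n" by simp
    ultimately show ?thesis using h_le_H[OF U(1), of x] by linarith
  qed
  define f where "f U x = h U x / H x" for U x
  have Une: "\<U> \<noteq> {}" using Ucov by auto
  have f_range: "0 \<le> f U x \<and> f U x \<le> 1" if "U \<in> \<U>" for U x
    unfolding f_def using h_nonneg[OF that] h_le_H[OF that] H_pos[of x]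
    by (auto simp: divide_le_eq_1)
  have f_sum: "((\<lambda>U. f U x) has_sum 1) \<U>" for x
  proof -
    have "((\<lambda>U. 1 / H x * h U x) has_sum (1 / H x * H x)) \<U>"
      unfolding H_def by (rule has_sum_cmult_right[OF has_sum_infsum[OF hU_summ]])
    then show ?thesis using H_pos[of x] unfolding f_def by simp
  qed
  have f_cont: "\<exists>V. open V \<and> x \<in> V \<and> (\<forall>y\<in>V. infsum (\<lambda>U. \<bar>f U y - f U x\<bar>) \<U> < e)"
    if epos: "e > 0" for x e
  proof -
    define Hx where "Hx = H x"
    have Hx: "Hx > 0" using H_pos unfolding Hx_def by simp
    define \<delta> where "\<delta> = min (Hx/2) (e * Hx / 8)"
    have dpos: "\<delta> > 0" using Hx epos unfolding \<delta>_def by simp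
    obtain P where P: "open P" "x \<in> P"
      "\<And>y FF. y \<in> P \<Longrightarrow> finite FF \<Longrightarrow> FF \<subseteq> \<U> \<Longrightarrow> (\<Sum>U\<in>FF. \<bar>h U y - h U x\<bar>) \<le> \<delta>"
      using hdiff_small[OF dpos, where x=x] by metis
    have "infsum (\<lambda>U. \<bar>f U y - f U x\<bar>) \<U> < e" if y: "y \<in> P" for y
    proof -
      define Hy where "Hy = H y"
      have ds: "(\<lambda>U. \<bar>h U y - h U x\<bar>) summable_on \<U>" "infsum (\<lambda>U. \<bar>h U y - h U x\<bar>) \<U> \<le> \<delta>"
        using fin_summable[of \<U> "\<lambda>U. \<bar>h U y - h U x\<bar>" \<delta>] P(3)[OF y] by auto
      have "Hy \<le> infsum (\<lambda>U. h U x + \<bar>h U y - h U x\<bar>) \<U>"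
        unfolding Hy_def H_def
        by (rule infsum_mono[OF hU_summ summable_on_add[OF hU_summ ds(1)]]) auto
      also have "\<dots> = Hx + infsum (\<lambda>U. \<bar>h U y - h U x\<bar>) \<U>"
        unfolding Hx_def H_def by (rule infsum_add[OF hU_summ ds(1)])
      finally have H1: "Hy \<le> Hx + \<delta>" using ds(2) by simp
      have "Hx \<le> infsum (\<lambda>U. h U y + \<bar>h U y - h U x\<bar>) \<U>"
        unfolding Hx_def H_def
        by (rule infsum_mono[OF hU_summ summable_on_add[OF hU_summ ds(1)]]) auto
      also have "\<dots> = Hy + infsum (\<lambda>U. \<bar>h U y - h U x\<bar>) \<U>"
        unfolding Hy_def H_def by (rule infsum_add[OF hU_summ ds(1)])
      finally have H2: "Hx \<le> Hy + \<delta>" using ds(2) by simp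
      have dHx: "\<delta> \<le> Hx/2" "\<delta> \<le> e * Hx / 8" unfolding \<delta>_def by auto
      have Hy: "Hy \<ge> Hx/2" using H2 dHx by linarith
      have Hypos: "Hy > 0" using Hy Hx by linarith
      have dH: "\<bar>Hx - Hy\<bar> \<le> \<delta>" using H1 H2 by linarith
      have fin: "(\<Sum>U\<in>FF. \<bar>f U y - f U x\<bar>) \<le> 4 * \<delta> / Hx" if FF: "finite FF" "FF \<subseteq> \<U>" for FF
      proof -
        have pt: "\<bar>f U y - f U x\<bar> \<le> \<bar>h U y - h U x\<bar> / Hy + h U x * (\<delta> / (Hx * Hy))" if U: "U \<in> \<U>" for U
        proof -
          have e1: "f U y - f U x = (h U y - h U x) / Hy + h U x * ((Hx - Hy) / (Hx * Hy))"
            unfolding f_def Hx_def[symmetric] Hy_def[symmetric] using Hx Hypos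
            by (simp add: field_simps)
          have "\<bar>h U x * ((Hx - Hy) / (Hx * Hy))\<bar> = h U x * (\<bar>Hx - Hy\<bar> / (Hx * Hy))"
            using h_nonneg[OF U] Hx Hypos by (simp add: abs_mult)
          also have "\<dots> \<le> h U x * (\<delta> / (Hx * Hy))"
            using h_nonneg[OF U] Hx Hypos dH by (intro mult_left_mono divide_right_mono) auto
          finally have "\<bar>h U x * ((Hx - Hy) / (Hx * Hy))\<bar> \<le> h U x * (\<delta> / (Hx * Hy))" .
          moreover have "\<bar>(h U y - h U x) / Hy\<bar> = \<bar>h U y - h U x\<bar> / Hy"
            using Hypos by simp
          moreover have "\<bar>(h U y - h U x) / Hy + h U x * ((Hx - Hy) / (Hx * Hy))\<bar>
              \<le> \<bar>(h U y - h U x) / Hy\<bar> + \<bar>h U x * ((Hx - Hy) / (Hx * Hy))\<bar>"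
            by (rule abs_triangle_ineq)
          ultimately show ?thesis unfolding e1
            by (intro order_trans[OF abs_triangle_ineq] add_mono) auto
        qed
        have "(\<Sum>U\<in>FF. \<bar>f U y - f U x\<bar>) \<le> (\<Sum>U\<in>FF. \<bar>h U y - h U x\<bar> / Hy + h U x * (\<delta> / (Hx * Hy)))"
          using FF pt by (intro sum_mono) blast
        also have "\<dots> = (\<Sum>U\<in>FF. \<bar>h U y - h U x\<bar>) / Hy + (\<Sum>U\<in>FF. h U x) * (\<delta> / (Hx * Hy))"
          by (simp add: sum.distrib sum_divide_distrib sum_distrib_right)
        also have "\<dots> \<le> \<delta> / Hy + Hx * (\<delta> / (Hx * Hy))"
        proof (rule add_mono)
          show "(\<Sum>U\<in>FF. \<bar>h U y - h U x\<bar>) / Hy \<le> \<delta> / Hy"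
            using P(3)[OF y FF] Hypos by (simp add: divide_right_mono)
          show "(\<Sum>U\<in>FF. h U x) * (\<delta> / (Hx * Hy)) \<le> Hx * (\<delta> / (Hx * Hy))"
            using Hsum[OF FF, of x] dpos Hx Hypos unfolding Hx_def by (intro mult_right_mono) auto
        qed
        also have "\<dots> = 2 * \<delta> / Hy" using Hx by (simp add: field_simps)
        also have "\<dots> \<le> 2 * \<delta> / (Hx / 2)"
          using Hy Hx dpos by (intro divide_left_mono) auto
        also have "\<dots> = 4 * \<delta> / Hx" by simp
        finally show ?thesis .
      qed
      have "infsum (\<lambda>U. \<bar>f U y - f U x\<bar>) \<U> \<le> 4 * \<delta> / Hx"
        by (rule fin_summable(2)) (use fin in auto)
      also have "4 * \<delta> / Hx \<le> e / 2"
        using dHx(2) Hx by (simp add: field_simps)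
      also have "\<dots> < e" using epos by simp
      finally show ?thesis .
    qed
    then show ?thesis using P by blast
  qed
  have pou: "partition_of_unity \<U> f"
    unfolding partition_of_unity_def
    by (intro conjI Une ballI allI impI f_range[THEN conjunct1] f_range[THEN conjunct2] f_sum f_cont)
  have small: "small_partition \<U> \<U> f"
    unfolding small_partition_def
  proof
    fix U assume U: "U \<in> \<U>"
    have "{x. f U x \<in> {0<..1}} \<subseteq> U"
    proof
      fix x assume "x \<in> {x. f U x \<in> {0<..1}}"
      then have "f U x > 0" by auto
      then have hp: "h U x \<noteq> 0" unfolding f_def by auto
      have "\<exists>n. g n U x \<noteq> 0"
      proof (rule ccontr)
        assume "\<not> (\<exists>n. g n U x \<noteq> 0)"
        then have "h U x = 0" unfolding h_def by simp
        then show False using hp by simp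
      qed
      then obtain n where "g n U x \<noteq> 0" by blast
      then have "x \<in> Gn n U" using g_zero[OF U] by blast
      then show "x \<in> U" using Gn_sub by blast
    qed
    then show "\<exists>U'\<in>\<U>. {x. f U x \<in> {0<..1}} \<subseteq> U'" using U by blast
  qed
  show ?thesis using pou small by blast
qed

end
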